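(* Let $\mathcal{X}=[0,1]^2$, let $\mathcal{G}$ be the class of monotone allocations and $\{\mathcal{G}_k\}_{k\ge1}$ the piecewise-linear monotone sieve defined in the context. Fix $M<\infty$, $\kappa\in(0,1/2)$, $A>0$, and let $\mathcal{P}_r$ be the set of distributions under which $X$ has a density with respect to Lebesgue measure on $[0,1]^2$ bounded above by $A$. Then $$\sup_{P\in\mathcal{P}_r\cap\mathcal{P}(M,\kappa)}\big(W^*_{\mathcal{G}}-W^*_{\mathcal{G}_k}\big)\le A\frac{M}{\kappa}2^{-k}\quad\text{for every }k\ge1.$$
   Context: $P$ is the distribution of $(Y,D,X)$ with outcome $Y\in\mathbb{R}$, treatment $D\in\{0,1\}$, covariate $X=(X_1,X_2)\in[0,1]^2$; $e(x)=E_P[D\mid X=x]$. $\mathcal{P}(M,\kappa)$: distributions with support of $Y$ in $[-M/2,M/2]$ and $e(x)\in[\kappa,1-\kappa]$ for all $x$. Welfare: $W(G)=E_P[(\frac{YD}{e(X)}-\frac{Y(1-D)}{1-e(X)})\mathbf{1}\{X\in G\}]$, $W^*_{\mathcal{A}}=\sup_{G\in\mathcal{A}}W(G)$. Monotone allocations: $\mathcal{G}=\{\{(x_1,x_2)\in[0,1]^2:x_2\le f(x_1)\}: f:[0,1]\to[0,1]\text{ non-increasing}\}$. Sieve: for an integer $T$ and $0\le j\le T$, $\psi_{T,j}(x)=1-|Tx-j|$ for $x\in[\frac{j-1}{T},\frac{j+1}{T}]\cap[0,1]$ and $0$ otherwise; with $T=2^{k-1}$, $\mathcal{G}_k=\{\{(x_1,x_2)\in[0,1]^2:x_2\le\sum_{j=0}^T\theta_j\psi_{T,j}(x_1)\}:\theta_0\ge\theta_1\ge\dots\ge\theta_T,\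 \theta_j\in\mathbb{R}\}$ (allocations whose boundary is a non-increasing piecewise-linear function with kinks only at the points $j/T$). *)

theory Defs
  imports "HOL-Probability.Probability"
begin

type_synonym obs = "real \<times> real \<times> (real \<times> real)"

definition Yv :: "obs \<Rightarrow> real" where "Yv \<omega> = fst \<omega>"
definition Dv :: "obs \<Rightarrow> real" where "Dv \<omega> = fst (snd \<omega>)"
definition Xv :: "obs \<Rightarrow> real \<times> real" where "Xv \<omega> = snd (snd \<omega>)"

definition unit_sq :: "(real \<times> real) set" where
  "unit_sq = {0..1} \<times> {0..1}"

text \<open>e is a version of the propensity score E_P[D | X = x]: Borel measurable and
  E[D 1{X \<in> B}] = E[e(X) 1{X \<in> B}] for every Borel B.\<close>
definition is_propensity :: "obs measure \<Rightarrow> (real \<times> real \<Rightarrow> real) \<Rightarrow> bool" where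
  "is_propensity P e \<longleftrightarrow> e \<in> borel_measurable borel \<and>
     (\<forall>B \<in> sets (borel :: (real \<times> real) measure).
        (\<integral>\<omega>. Dv \<omega> * indicator B (Xv \<omega>) \<partial>P) = (\<integral>\<omega>. e (Xv \<omega>) * indicator B (Xv \<omega>) \<partial>P))"

definition in_P_M_kappa :: "real \<Rightarrow> real \<Rightarrow> obs measure \<Rightarrow> (real \<times> real \<Rightarrow> real) \<Rightarrow> bool" where
  "in_P_M_kappa M \<kappa> P e \<longleftrightarrow>
     prob_space P \<and> sets P = sets (borel :: obs measure) \<and>
     (AE \<omega> in P. Yv \<omega> \<in> {-M/2..M/2}) \<and>
     (AE \<omega> in P. Dv \<omega> \<in> {0,1}) \<and>
     (AE \<omega> in P. Xv \<omega> \<in> unit_sq) \<and>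
     is_propensity P e \<and>
     (\<forall>x \<in> unit_sq. \<kappa> \<le> e x \<and> e x \<le> 1 - \<kappa>)"

definition density_bounded :: "real \<Rightarrow> obs measure \<Rightarrow> bool" where
  "density_bounded A P \<longleftrightarrow>
     (\<exists>f :: real \<times> real \<Rightarrow> real. f \<in> borel_measurable lborel \<and>
        (\<forall>x. 0 \<le> f x \<and> f x \<le> A) \<and>
        distr P lborel Xv = density lborel (\<lambda>x. ennreal (f x)))"

definition welfare :: "obs measure \<Rightarrow> (real \<times> real \<Rightarrow> real) \<Rightarrow> (real \<times> real) set \<Rightarrow> real" where
  "welfare P e G =
     (\<integral>\<omega>. (Yv \<omega> * Dv \<omega> / e (Xv \<omega>) - Yv \<omega> * (1 - Dv \<omega>) / (1 - e (Xv \<omega>)))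
            * indicator G (Xv \<omega>) \<partial>P)"

definition opt_welfare :: "obs measure \<Rightarrow> (real \<times> real \<Rightarrow> real) \<Rightarrow> (real \<times> real) set set \<Rightarrow> real" where
  "opt_welfare P e \<A> = (SUP G\<in>\<A>. welfare P e G)"

definition monotone_allocs :: "(real \<times> real) set set" where
  "monotone_allocs =
     {{x \<in> unit_sq. snd x \<le> f (fst x)} | f :: real \<Rightarrow> real.
        (\<forall>t \<in> {0..1}. f t \<in> {0..1}) \<and>
        (\<forall>s t. 0 \<le> s \<longrightarrow> s \<le> t \<longrightarrow> t \<le> 1 \<longrightarrow> f t \<le> f s)}"

definition hat_fn :: "nat \<Rightarrow> nat \<Rightarrow> real \<Rightarrow> real" where
  "hat_fn T j x =
     (if x \<in> {(real j - 1) / real T .. (real j + 1) / real T} \<inter> {0..1}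
      then 1 - \<bar>real T * x - real j\<bar> else 0)"

definition sieve :: "nat \<Rightarrow> (real \<times> real) set set" where
  "sieve k =
     (let T = 2 ^ (k - 1) in
      {{x \<in> unit_sq. snd x \<le> (\<Sum>j = 0..T. \<theta> j * hat_fn T j (fst x))} | \<theta> :: nat \<Rightarrow> real.
         \<forall>j < T. \<theta> (Suc j) \<le> \<theta> j})"

end

theory Submission imports Defs begin

lemma box_measure:
  fixes a b c d :: real
  assumes "a \<le> b" "c \<le> d"
  shows "emeasure lborel ({a..b} \<times> {c..d}) = ennreal ((b-a)*(d-c))"
  using assms
  by (simp add: lborel_prod[symmetric] lborel.emeasure_pair_measure_Times ennreal_mult)


lemma box_borel:
  fixes a b c d :: real
  shows "{a..b} \<times> {c..d} \<in> sets borel"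
proof -
  have "{a..b} \<times> {c..d} \<in> sets (borel \<Otimes>\<^sub>M borel)" by (rule pair_measureI) auto
  thus ?thesis unfolding borel_prod .
qed

lemma hat_zero:
  fixes T i :: nat and x :: real
  assumes "real T > 0" "\<bar>T*x - i\<bar> \<ge> 1"
  shows "hat_fn T i x = 0"
proof -
  have "1 - \<bar>T*x - i\<bar> = 0" if h: "(real i - 1)/T \<le> x" "x \<le> (real i + 1)/T"
  proof -
    have "real i - 1 \<le> T*x" using h(1) assms(1) by (simp add: divide_le_eq mult.commute)
    moreover have "T*x \<le> real i + 1" using h(2) assms(1) by (simp add: le_divide_eq mult.commute)
    ultimately have "\<bar>T*x - i\<bar> \<le> 1" by linarith
    thus ?thesis using assms(2) by linarith
  qed
  thus ?thesis unfolding hat_fn_def by auto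
qed

lemma hat_val:
  fixes T i :: nat and x :: real
  assumes "real T > 0" "\<bar>T*x - i\<bar> \<le> 1" "0 \<le> x" "x \<le> 1"
  shows "hat_fn T i x = 1 - \<bar>T*x - i\<bar>"
proof -
  have "(real i - 1)/T \<le> x" using assms by (simp add: divide_le_eq mult.commute)
  moreover have "x \<le> (real i + 1)/T" using assms by (simp add: le_divide_eq mult.commute)
  ultimately show ?thesis unfolding hat_fn_def using assms by auto
qed

lemma hat_sum:
  fixes T j :: nat and x :: real and \<theta> :: "nat \<Rightarrow> real"
  assumes "1 \<le> T" "j < T" "real j \<le> T*x" "T*x \<le> real j + 1"
  shows "(\<Sum>i = 0..T. \<theta> i * hat_fn T i x) = \<theta> j * (real j + 1 - T*x) + \<theta> (Suc j) * (T*x - j)"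
proof -
  have Tp: "real T > 0" using assms by simp
  note x1 = assms(3,4)
  have "0 \<le> T*x" using x1 by linarith
  hence x0: "0 \<le> x" using Tp by (simp add: zero_le_mult_iff)
  have "T*x \<le> T*1" using x1 assms(2) by linarith
  hence x01: "x \<le> 1" using Tp by simp
  have z: "\<theta> i * hat_fn T i x = 0" if "i \<in> {0..T} - {j, Suc j}" for i
  proof -
    have "i < j \<or> i > Suc j" using that by auto
    hence "\<bar>T*x - i\<bar> \<ge> 1"
    proof
      assume "i < j" then have "real i + 1 \<le> j" by linarith
      then show ?thesis using x1 by linarith
    next
      assume "i > Suc j" then have "real i \<ge> j + 2" by linarith
      then show ?thesis using x1 by linarith
    qed
    thus ?thesis using hat_zero[OF Tp] by simp
  qed
  have "(\<Sum>i = 0..T. \<theta> i * hat_fn T i x) = (\<Sum>i \<in> {j, Suc j}. \<theta> i * hat_fn T i x)"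
    by (rule sum.mono_neutral_right) (use assms z in auto)
  also have "\<dots> = \<theta> j * hat_fn T j x + \<theta> (Suc j) * hat_fn T (Suc j) x" by simp
  also have "hat_fn T j x = real j + 1 - T*x"
    using hat_val[OF Tp _ x0 x01, of j] x1 by simp
  also have "hat_fn T (Suc j) x = T*x - j"
    using hat_val[OF Tp _ x0 x01, of "Suc j"] x1 by simp
  finally show ?thesis .
qed

lemma hat_meas: "hat_fn T i \<in> borel_measurable borel"
  unfolding hat_fn_def by measurable

lemma region_borel:
  fixes g :: "real \<Rightarrow> real"
  assumes [measurable]: "g \<in> borel_measurable borel"
  shows "{x\<in>unit_sq. snd x \<le> g (fst x)} \<in> sets borel"
proof -
  have "{x\<in>unit_sq. snd x \<le> g (fst x)} = {x. 0 \<le> fst x \<and> fst x \<le> 1 \<and> 0 \<le> snd x \<and> snd x \<le> 1 \<and> snd x \<le> g (fst x)}"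
    unfolding unit_sq_def by auto
  also have "\<dots> \<in> sets (borel \<Otimes>\<^sub>M borel)"
  proof -
    have "Measurable.pred (borel \<Otimes>\<^sub>M borel) (\<lambda>x::real\<times>real. 0 \<le> fst x \<and> fst x \<le> 1 \<and> 0 \<le> snd x \<and> snd x \<le> 1 \<and> snd x \<le> g (fst x))"
      by measurable
    thus ?thesis unfolding pred_def by (simp add: space_pair_measure)
  qed
  finally show ?thesis unfolding borel_prod .
qed

lemma mono_region_borel:
  fixes f :: "real \<Rightarrow> real"
  assumes "\<forall>s t. 0 \<le> s \<longrightarrow> s \<le> t \<longrightarrow> t \<le> 1 \<longrightarrow> f t \<le> f s"
  shows "{x\<in>unit_sq. snd x \<le> f (fst x)} \<in> sets borel"
proof -
  define h where "h t = f (max 0 (min 1 t))" for t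
  have "mono (\<lambda>t. - h t)"
    unfolding mono_def h_def using assms by (auto simp: max_def min_def)
  hence "(\<lambda>t. - h t) \<in> borel_measurable borel" by (rule borel_measurable_mono)
  hence "(\<lambda>t. - (- h t)) \<in> borel_measurable borel" by measurable
  hence hm: "h \<in> borel_measurable borel" by simp
  have "{x\<in>unit_sq. snd x \<le> f (fst x)} = {x\<in>unit_sq. snd x \<le> h (fst x)}"
    unfolding unit_sq_def h_def by (auto simp: max_def min_def)
  thus ?thesis using region_borel[OF hm] by simp
qed

lemma approx_geom:
  fixes f :: "real \<Rightarrow> real" and T :: nat
  assumes fr: "\<forall>t \<in> {0..1}. f t \<in> {0..1}"
    and fm: "\<forall>s t. 0 \<le> s \<longrightarrow> s \<le> t \<longrightarrow> t \<le> 1 \<longrightarrow> f t \<le> f s"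
    and T1: "1 \<le> T"
    and x: "x \<in> unit_sq" "(snd x \<le> f (fst x)) \<noteq> (snd x \<le> (\<Sum>i = 0..T. f (real i / T) * hat_fn T i (fst x)))"
  shows "x \<in> (\<Union>j<T. {real j / T .. real (Suc j) / T} \<times> {f (real (Suc j) / T) .. f (real j / T)})"
proof -
  have Tp: "real T > 0" using T1 by simp
  obtain x1 x2 where xx: "x = (x1, x2)" by (cases x)
  have x1r: "0 \<le> x1" "x1 \<le> 1" using x unfolding xx unit_sq_def by auto
  define j where "j = min (nat \<lfloor>T*x1\<rfloor>) (T - 1)"
  have jT: "j < T" unfolding j_def using T1 by auto
  have Tx1: "T*x1 \<le> T" using x1r Tp by simp
  have j1: "real j \<le> T*x1 \<and> T*x1 \<le> real j + 1"
  proof (cases "nat \<lfloor>T*x1\<rfloor> \<le> T - 1")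
    case True
    hence "j = nat \<lfloor>T*x1\<rfloor>" unfolding j_def by simp
    moreover have "0 \<le> T*x1" using x1r by simp
    ultimately show ?thesis by linarith
  next
    case False
    hence "j = T - 1" unfolding j_def by simp
    hence "real j = real T - 1" using T1 by simp
    moreover have "\<lfloor>T*x1\<rfloor> \<ge> T" using False T1 by linarith
    ultimately show ?thesis using Tx1 by linarith
  qed
  have a1: "real j / T \<le> x1" using j1 Tp by (simp add: divide_le_eq mult.commute)
  have a2: "x1 \<le> real (Suc j) / T" using j1 Tp by (simp add: le_divide_eq mult.commute)
  have b0: "0 \<le> real j / T" by simp
  have b1: "real (Suc j) / T \<le> 1" using jT Tp by (simp add: divide_le_eq)
  define lo where "lo = f (real (Suc j) / T)"
  define hi where "hi = f (real j / T)"
  have flo: "lo \<le> f x1" unfolding lo_def using fm a2 b1 x1r by auto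
  have fhi: "f x1 \<le> hi" unfolding hi_def using fm a1 b0 x1r by auto
  have lohi: "lo \<le> hi" using flo fhi by linarith
  have gs: "(\<Sum>i = 0..T. f (real i / T) * hat_fn T i x1) = hi * (real j + 1 - T*x1) + lo * (T*x1 - j)"
    using hat_sum[OF T1 jT, of x1 "\<lambda>i. f (real i / T)"] j1 unfolding hi_def lo_def by simp
  define a where "a = real j + 1 - T*x1"
  define b where "b = T*x1 - real j"
  have ab: "0 \<le> a" "0 \<le> b" "a + b = 1" unfolding a_def b_def using j1 by auto
  have "lo * b \<le> hi * b" using lohi ab by (simp add: mult_right_mono)
  moreover have "lo * a \<le> hi * a" using lohi ab by (simp add: mult_right_mono)
  moreover have "hi * a + hi * b = hi" "lo * a + lo * b = lo" using ab by (simp_all add: distrib_left[symmetric])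
  ultimately have gb: "lo \<le> hi * a + lo * b" "hi * a + lo * b \<le> hi" by linarith+
  have "lo \<le> x2 \<and> x2 \<le> hi"
    using x(2) gs gb flo fhi unfolding xx a_def b_def by auto
  thus ?thesis using a1 a2 jT unfolding xx lo_def hi_def by auto
qed

lemma boxes_measure:
  fixes f :: "real \<Rightarrow> real" and T :: nat
  assumes fr: "\<forall>t \<in> {0..1}. f t \<in> {0..1}"
    and fm: "\<forall>s t. 0 \<le> s \<longrightarrow> s \<le> t \<longrightarrow> t \<le> 1 \<longrightarrow> f t \<le> f s"
    and T1: "1 \<le> T"
  shows "emeasure lborel (\<Union>j<T. {real j / T .. real (Suc j) / T} \<times> {f (real (Suc j) / T) .. f (real j / T)}) \<le> ennreal (1 / T)"
proof -
  have Tp: "real T > 0" using T1 by simp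
  define F where "F n = f (real n / T)" for n
  have Fm: "F (Suc j) \<le> F j" if "j < T" for j
  proof -
    have "real (Suc j) / T \<le> 1" using that Tp by (simp add: divide_le_eq)
    thus ?thesis unfolding F_def using fm by (simp add: divide_right_mono)
  qed
  have "emeasure lborel (\<Union>j<T. {real j / T .. real (Suc j) / T} \<times> {F (Suc j) .. F j})
     \<le> (\<Sum>j<T. emeasure lborel ({real j / T .. real (Suc j) / T} \<times> {F (Suc j) .. F j}))"
    by (rule emeasure_subadditive_finite) (auto simp: box_borel)
  also have "\<dots> = (\<Sum>j<T. ennreal ((real (Suc j) / T - real j / T) * (F j - F (Suc j))))"
    by (rule sum.cong[OF refl], rule box_measure) (use Fm Tp in \<open>auto simp: divide_right_mono\<close>)
  also have "\<dots> = ennreal (\<Sum>j<T. (real (Suc j) / T - real j / T) * (F j - F (Suc j)))"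
    by (rule sum_ennreal) (use Fm Tp in \<open>auto intro!: mult_nonneg_nonneg simp: diff_divide_distrib[symmetric]\<close>)
  also have "(\<Sum>j<T. (real (Suc j) / T - real j / T) * (F j - F (Suc j))) = (1/T) * (\<Sum>j<T. F j - F (Suc j))"
    by (simp add: sum_distrib_left diff_divide_distrib[symmetric])
  also have "\<dots> = (1/T) * (F 0 - F T)" by (simp add: sum_lessThan_telescope')
  also have "\<dots> \<le> 1/T"
  proof -
    have "F 0 \<in> {0..1}" "F T \<in> {0..1}" unfolding F_def using fr Tp by auto
    hence "F 0 - F T \<le> 1" by auto
    thus ?thesis using Tp by (simp add: divide_le_eq)
  qed
  finally show ?thesis unfolding F_def by (simp add: ennreal_leI)
qed

lemma dens_bound:
  fixes A r :: real and P :: "obs measure" and B :: "(real \<times> real) set"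
  assumes "density_bounded A P" "Xv \<in> measurable P borel" "B \<in> sets borel"
    "emeasure lborel B \<le> ennreal r" "0 \<le> A" "0 \<le> r"
  shows "emeasure P (Xv -` B \<inter> space P) \<le> ennreal (A*r)"
proof -
  obtain fd :: "real \<times> real \<Rightarrow> real" where fdm: "fd \<in> borel_measurable lborel"
    and fdb: "\<forall>x. 0 \<le> fd x \<and> fd x \<le> A"
    and fdd: "distr P lborel Xv = density lborel (\<lambda>x. ennreal (fd x))"
    using assms(1) unfolding density_bounded_def by blast
  have fdm'[measurable]: "fd \<in> borel_measurable borel" using fdm by simp
  have "emeasure P (Xv -` B \<inter> space P) = emeasure (distr P lborel Xv) B"
    by (rule emeasure_distr[symmetric]) (use assms in simp_all)
  also have "\<dots> = (\<integral>\<^sup>+ x. ennreal (fd x) * indicator B x \<partial>lborel)"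
    unfolding fdd by (rule emeasure_density) (use assms in simp_all)
  also have "\<dots> \<le> (\<integral>\<^sup>+ x. ennreal A * indicator B x \<partial>lborel)"
    by (rule nn_integral_mono) (use fdb in \<open>auto simp: indicator_def ennreal_leI\<close>)
  also have "\<dots> = ennreal A * emeasure lborel B"
    by (rule nn_integral_cmult_indicator) (use assms in simp)
  also have "\<dots> \<le> ennreal A * ennreal r" by (rule mult_left_mono) (use assms in simp_all)
  also have "\<dots> = ennreal (A*r)" using assms by (simp add: ennreal_mult)
  finally show ?thesis .
qed

lemma psi_pt:
  fixes y d ev M \<kappa> :: real
  assumes "-M/2 \<le> y" "y \<le> M/2" "d \<in> {0,1}" "\<kappa> \<le> ev" "ev \<le> 1-\<kappa>" "0<\<kappa>"
  shows "\<bar>y*d/ev - y*(1-d)/(1-ev)\<bar> \<le> M/(2*\<kappa>)"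
proof -
  have ay: "\<bar>y\<bar> \<le> M/2" using assms by auto
  have q1: "\<bar>y\<bar> / u \<le> \<bar>y\<bar> / \<kappa>" if "\<kappa> \<le> u" for u
    using that assms(6) by (simp add: divide_left_mono)
  have q2: "\<bar>y\<bar> / \<kappa> \<le> M/(2*\<kappa>)"
  proof -
    have "\<bar>y\<bar> / \<kappa> \<le> (M/2) / \<kappa>" by (rule divide_right_mono[OF ay]) (use assms(6) in simp)
    thus ?thesis by simp
  qed
  have p: "0 < ev" "0 < 1 - ev" using assms by auto
  have k1: "\<kappa> \<le> 1 - ev" using assms(5) by linarith
  have h1: "\<bar>y\<bar> / ev \<le> M/(2*\<kappa>)" using q1[OF assms(4)] q2 by linarith
  have h2: "\<bar>y\<bar> / (1-ev) \<le> M/(2*\<kappa>)" using q1[OF k1] q2 by linarith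
  show ?thesis using assms(3) h1 h2 p by (auto simp: abs_divide)
qed

theorem proposition5p1:
  fixes M \<kappa> A :: real and k :: nat
    and P :: "obs measure" and e :: "real \<times> real \<Rightarrow> real"
  assumes "0 < \<kappa>" and "\<kappa> < 1/2" and "0 < A" and "1 \<le> k"
    and "in_P_M_kappa M \<kappa> P e"
    and "density_bounded A P"
  shows "opt_welfare P e monotone_allocs - opt_welfare P e (sieve k) \<le> A * (M / \<kappa>) * (1/2) ^ k"
proof -
  have ps: "prob_space P" and sP: "sets P = sets borel"
    and aY: "AE \<omega> in P. Yv \<omega> \<in> {-M/2..M/2}" and aD: "AE \<omega> in P. Dv \<omega> \<in> {0,1}"
    and aX: "AE \<omega> in P. Xv \<omega> \<in> unit_sq" and prp: "is_propensity P e"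
    and eb: "\<forall>x \<in> unit_sq. \<kappa> \<le> e x \<and> e x \<le> 1 - \<kappa>"
    using assms(5) unfolding in_P_M_kappa_def by auto
  interpret prob_space P by (rule ps)
  have em[measurable]: "e \<in> borel_measurable borel" using prp unfolding is_propensity_def by auto
  have sP': "sets P = sets (borel \<Otimes>\<^sub>M (borel \<Otimes>\<^sub>M borel))" unfolding borel_prod by (rule sP)
  have mPb: "\<And>N. measurable P N = measurable (borel \<Otimes>\<^sub>M (borel \<Otimes>\<^sub>M borel)) N"
    by (rule measurable_cong_sets[OF sP' refl])
  have mX[measurable]: "Xv \<in> measurable P borel" unfolding mPb Xv_def[abs_def] by measurable
  have mY[measurable]: "Yv \<in> borel_measurable P" unfolding mPb Yv_def[abs_def] by measurable
  have mD[measurable]: "Dv \<in> borel_measurable P" unfolding mPb Dv_def[abs_def] by measurable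
  define \<psi> where "\<psi> \<omega> = Yv \<omega> * Dv \<omega> / e (Xv \<omega>) - Yv \<omega> * (1 - Dv \<omega>) / (1 - e (Xv \<omega>))" for \<omega>
  have m\<psi>[measurable]: "\<psi> \<in> borel_measurable P" unfolding \<psi>_def by measurable
  define c where "c = M / (2*\<kappa>)"
  have aB: "AE \<omega> in P. \<bar>\<psi> \<omega>\<bar> \<le> c"
    using aY aD aX
  proof eventually_elim
    case (elim \<omega>)
    then show ?case unfolding \<psi>_def c_def using psi_pt[of M "Yv \<omega>" "Dv \<omega>" \<kappa> "e (Xv \<omega>)"] eb assms(1) by auto
  qed
  have c0: "0 \<le> c"
  proof -
    have "AE \<omega> in P. 0 \<le> c" using aY by (rule eventually_mono) (use assms(1) in \<open>auto simp: c_def\<close>)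
    thus ?thesis by simp
  qed
  have intS: "integrable P (\<lambda>\<omega>. \<psi> \<omega> * indicator S (Xv \<omega>))" if [measurable]: "S \<in> sets borel" for S
  proof (rule Bochner_Integration.integrable_bound[where f="\<lambda>_. c"])
    show "integrable P (\<lambda>_. c)" by simp
    show "(\<lambda>\<omega>. \<psi> \<omega> * indicator S (Xv \<omega>)) \<in> borel_measurable P" by measurable
    show "AE \<omega> in P. norm (\<psi> \<omega> * indicator S (Xv \<omega>)) \<le> norm c"
      using aB by eventually_elim (use c0 in \<open>auto simp: indicator_def\<close>)
  qed
  have welf: "welfare P e S = (\<integral>\<omega>. \<psi> \<omega> * indicator S (Xv \<omega>) \<partial>P)" for S
    unfolding welfare_def \<psi>_def ..
  have wb: "\<bar>welfare P e S\<bar> \<le> c" for S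
  proof (cases "integrable P (\<lambda>\<omega>. \<psi> \<omega> * indicator S (Xv \<omega>))")
    case True
    have "\<bar>welfare P e S\<bar> \<le> (\<integral>\<omega>. \<bar>\<psi> \<omega> * indicator S (Xv \<omega>)\<bar> \<partial>P)"
      unfolding welf by (rule integral_abs_bound)
    also have "\<dots> \<le> (\<integral>\<omega>. c \<partial>P)"
    proof (rule integral_mono_AE)
      show "integrable P (\<lambda>\<omega>. \<bar>\<psi> \<omega> * indicator S (Xv \<omega>)\<bar>)" using True by simp
      show "integrable P (\<lambda>\<omega>. c)" by simp
      show "AE \<omega> in P. \<bar>\<psi> \<omega> * indicator S (Xv \<omega>)\<bar> \<le> c"
        using aB by (rule eventually_mono) (use c0 in \<open>auto simp: indicator_def\<close>)
    qed
    also have "\<dots> = c" by (simp add: prob_space)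
    finally show ?thesis .
  next
    case False
    thus ?thesis unfolding welf using c0 by (simp add: not_integrable_integral_eq)
  qed
  define T :: nat where "T = 2 ^ (k - 1)"
  have T1: "1 \<le> T" unfolding T_def by simp
  have Tp: "real T > 0" using T1 by simp
  have key: "\<exists>G' \<in> sieve k. welfare P e G \<le> welfare P e G' + c * (A / T)" if G: "G \<in> monotone_allocs" for G
  proof -
    obtain f where Gf: "G = {x \<in> unit_sq. snd x \<le> f (fst x)}"
      and fr: "\<forall>t \<in> {0..1}. f t \<in> {0..1}"
      and fm: "\<forall>s t. 0 \<le> s \<longrightarrow> s \<le> t \<longrightarrow> t \<le> 1 \<longrightarrow> f t \<le> f s"
      using G unfolding monotone_allocs_def by blast
    define \<theta> where "\<theta> i = f (real i / T)" for i
    define g where "g t = (\<Sum>i = 0..T. \<theta> i * hat_fn T i t)" for t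
    define G' where "G' = {x \<in> unit_sq. snd x \<le> g (fst x)}"
    define B where "B = (\<Union>j<T. {real j / T .. real (Suc j) / T} \<times> {f (real (Suc j) / T) .. f (real j / T)})"
    have G'S: "G' \<in> sieve k"
    proof -
      have "\<forall>j < T. \<theta> (Suc j) \<le> \<theta> j"
      proof (intro allI impI)
        fix j assume "j < T"
        hence "real (Suc j) / T \<le> 1" using Tp by (simp add: divide_le_eq)
        thus "\<theta> (Suc j) \<le> \<theta> j" unfolding \<theta>_def using fm by (simp add: divide_right_mono)
      qed
      thus ?thesis unfolding sieve_def Let_def G'_def g_def T_def[symmetric] by blast
    qed
    have GB[measurable]: "G \<in> sets borel" unfolding Gf by (rule mono_region_borel[OF fm])
    have gm: "g \<in> borel_measurable borel" unfolding g_def using hat_meas by measurable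
    have G'B[measurable]: "G' \<in> sets borel" unfolding G'_def by (rule region_borel[OF gm])
    have BB[measurable]: "B \<in> sets borel" unfolding B_def by (auto intro!: sets.finite_UN box_borel)
    have diffB: "x \<in> B" if "indicator G x \<noteq> (indicator G' x :: real)" for x
    proof -
      have xu: "x \<in> unit_sq" using that unfolding Gf G'_def by (cases "x \<in> unit_sq") (auto simp: indicator_def)
      have "(snd x \<le> f (fst x)) \<noteq> (snd x \<le> (\<Sum>i = 0..T. f (real i / T) * hat_fn T i (fst x)))"
        using that xu unfolding Gf G'_def g_def \<theta>_def by (auto simp: indicator_def of_bool_def split: if_splits)
      thus ?thesis unfolding B_def by (rule approx_geom[OF fr fm T1 xu])
    qed
    have mB: "emeasure lborel B \<le> ennreal (1 / T)" unfolding B_def by (rule boxes_measure[OF fr fm T1])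
    have mPB: "measure P (Xv -` B \<inter> space P) \<le> A / T"
    proof -
      have "emeasure P (Xv -` B \<inter> space P) \<le> ennreal (A * (1/T))"
        by (rule dens_bound[OF assms(6) mX BB mB]) (use assms(3) Tp in auto)
      hence "ennreal (measure P (Xv -` B \<inter> space P)) \<le> ennreal (A / T)"
        by (simp add: emeasure_eq_measure)
      thus ?thesis using assms(3) Tp by (simp add: ennreal_le_iff)
    qed
    have "welfare P e G - welfare P e G' = (\<integral>\<omega>. \<psi> \<omega> * indicator G (Xv \<omega>) - \<psi> \<omega> * indicator G' (Xv \<omega>) \<partial>P)"
      unfolding welf by (rule Bochner_Integration.integral_diff[symmetric]) (rule intS[OF GB], rule intS[OF G'B])
    also have "\<dots> \<le> (\<integral>\<omega>. c * indicator B (Xv \<omega>) \<partial>P)"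
    proof (rule integral_mono_AE)
      show "integrable P (\<lambda>\<omega>. \<psi> \<omega> * indicator G (Xv \<omega>) - \<psi> \<omega> * indicator G' (Xv \<omega>))"
        using intS[OF GB] intS[OF G'B] by (rule Bochner_Integration.integrable_diff)
      show "integrable P (\<lambda>\<omega>. c * indicator B (Xv \<omega>))"
      proof (rule Bochner_Integration.integrable_bound[where f="\<lambda>_. c"])
        show "integrable P (\<lambda>_. c)" by simp
        show "(\<lambda>\<omega>. c * indicator B (Xv \<omega>)) \<in> borel_measurable P" by measurable
        show "AE \<omega> in P. norm (c * indicator B (Xv \<omega>)) \<le> norm c"
          by (rule AE_I2) (use c0 in \<open>auto simp: indicator_def\<close>)
      qed
      show "AE \<omega> in P. \<psi> \<omega> * indicator G (Xv \<omega>) - \<psi> \<omega> * indicator G' (Xv \<omega>) \<le> c * indicator B (Xv \<omega>)"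
        using aB
      proof eventually_elim
        case (elim \<omega>)
        show ?case
        proof (cases "indicator G (Xv \<omega>) = (indicator G' (Xv \<omega>) :: real)")
          case True
          thus ?thesis using c0 by (simp add: indicator_def)
        next
          case False
          hence "Xv \<omega> \<in> B" by (rule diffB)
          thus ?thesis using elim by (auto simp: indicator_def)
        qed
      qed
    qed
    also have "\<dots> = c * measure P (Xv -` B \<inter> space P)"
    proof -
      have "(\<integral>\<omega>. c * indicator B (Xv \<omega>) \<partial>P) = (\<integral>\<omega>. c * indicator (Xv -` B \<inter> space P) \<omega> \<partial>P)"
        by (rule Bochner_Integration.integral_cong) (auto simp: indicator_def)
      also have "\<dots> = c * measure P (Xv -` B \<inter> space P)" by simp
      finally show ?thesis .
    qed
    also have "\<dots> \<le> c * (A / T)" using mPB c0 by (rule mult_left_mono)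
    finally show ?thesis using G'S by force
  qed
  have ne: "monotone_allocs \<noteq> {}"
  proof -
    have "{x \<in> unit_sq. snd x \<le> (\<lambda>_. 0::real) (fst x)} \<in> monotone_allocs"
      unfolding monotone_allocs_def by (rule CollectI, rule exI[where x="\<lambda>_. 0"]) simp
    thus ?thesis by blast
  qed
  have bdd: "bdd_above (welfare P e ` sieve k)"
    by (rule bdd_aboveI[of _ c]) (use wb in \<open>auto simp: abs_le_iff\<close>)
  have "opt_welfare P e monotone_allocs \<le> opt_welfare P e (sieve k) + c * (A / T)"
    unfolding opt_welfare_def
  proof (rule cSUP_least[OF ne])
    fix G assume "G \<in> monotone_allocs"
    then obtain G' where G': "G' \<in> sieve k" "welfare P e G \<le> welfare P e G' + c * (A / T)"
      using key by blast
    have "welfare P e G' \<le> (SUP G\<in>sieve k. welfare P e G)" by (rule cSUP_upper[OF G'(1) bdd])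
    thus "welfare P e G \<le> (SUP G\<in>sieve k. welfare P e G) + c * (A / T)" using G'(2) by linarith
  qed
  moreover have "c * (A / T) = A * (M / \<kappa>) * (1/2) ^ k"
  proof -
    obtain m where km: "k = Suc m" using assms(4) by (cases k) auto
    show ?thesis unfolding c_def T_def km by (simp add: field_simps)
  qed
  ultimately show ?thesis by linarith
qed

end
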